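(* For all sufficiently large $n\in\mathbb{N}$ there exists a graph $G$ on $n^{3/2}/(10^6\log n)$ vertices such that (i) every vertex of $G$ has degree at most $3n/(2\cdot 10^3)$; (ii) $G$ contains no clique on $10$ vertices; (iii) $G$ has no independent set of size $\sqrt{n}/50$.
   Context: Here $\log$ denotes the natural logarithm, and vertex counts are understood up to rounding to integers. *)

theory Defs
  imports Complex_Main
begin

definition simple_graph :: "'a set \<Rightarrow> ('a \<Rightarrow> 'a \<Rightarrow> bool) \<Rightarrow> bool" where
  "simple_graph V E \<longleftrightarrow> finite V \<and> (\<forall>x y. E x y \<longrightarrow> E y x) \<and> (\<forall>x. \<not> E x x)
     \<and> (\<forall>x y. E x y \<longrightarrow> x \<in> V \<and> y \<in> V)"

definition degree :: "'a set \<Rightarrow> ('a \<Rightarrow> 'a \<Rightarrow> bool) \<Rightarrow> 'a \<Rightarrow> nat" where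
  "degree V E v = card {u \<in> V. E v u}"

definition is_clique :: "'a set \<Rightarrow> ('a \<Rightarrow> 'a \<Rightarrow> bool) \<Rightarrow> 'a set \<Rightarrow> bool" where
  "is_clique V E S \<longleftrightarrow> S \<subseteq> V \<and> (\<forall>x\<in>S. \<forall>y\<in>S. x \<noteq> y \<longrightarrow> E x y)"

definition is_indep_set :: "'a set \<Rightarrow> ('a \<Rightarrow> 'a \<Rightarrow> bool) \<Rightarrow> 'a set \<Rightarrow> bool" where
  "is_indep_set V E S \<longleftrightarrow> S \<subseteq> V \<and> (\<forall>x\<in>S. \<forall>y\<in>S. \<not> E x y)"

end

theory Submission
  imports Defs "HOL-Probability.Product_PMF" "HOL-Real_Asymp.Real_Asymp" begin
hide_const (open) Polynomial.degree


lemma choose2_real: "real (k choose 2) = real k * (real k - 1) / 2"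
proof (induct k)
  case (Suc k)
  have "Suc k choose 2 = k + (k choose 2)" by (simp add: numeral_2_eq_2)
  then show ?case using Suc by (simp add: field_simps)
qed simp

lemma finite_set_Pi_bern: "finite P \<Longrightarrow> finite (set_pmf (Pi_pmf P False (\<lambda>_. bernoulli_pmf p)))"
proof -
  assume fP: "finite P"
  have "set_pmf (Pi_pmf P False (\<lambda>_. bernoulli_pmf p)) \<subseteq> (\<lambda>S x. x \<in> S) ` Pow P"
  proof
    fix f assume "f \<in> set_pmf (Pi_pmf P False (\<lambda>_. bernoulli_pmf p))"
    then have "\<forall>x. x \<notin> P \<longrightarrow> f x = False" using set_Pi_pmf_subset[OF fP, of False "\<lambda>_. bernoulli_pmf p"] by auto
    then have "f = (\<lambda>x. x \<in> {x\<in>P. f x})" by auto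
    then show "f \<in> (\<lambda>S x. x \<in> S) ` Pow P" by blast
  qed
  then show ?thesis using fP by (meson finite_Pow_iff finite_imageI finite_subset)
qed

lemma prob_all:
  assumes "finite P" "A \<subseteq> P" "0 \<le> p" "p \<le> 1"
  shows "measure_pmf.prob (Pi_pmf P False (\<lambda>_. bernoulli_pmf p)) {f. \<forall>e\<in>A. f e} = p ^ card A"
proof -
  have "{f. \<forall>e\<in>A. f e} = Pi P (\<lambda>e. if e \<in> A then {True} else UNIV)"
    using assms(2) by (auto simp: Pi_def)
  then have "measure_pmf.prob (Pi_pmf P False (\<lambda>_. bernoulli_pmf p)) {f. \<forall>e\<in>A. f e}
     = (\<Prod>e\<in>P. measure_pmf.prob (bernoulli_pmf p) (if e \<in> A then {True} else UNIV))"
    by (simp add: measure_Pi_pmf_Pi assms(1))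
  also have "\<dots> = (\<Prod>e\<in>P. if e \<in> A then p else 1)"
    by (intro prod.cong refl) (auto simp: measure_pmf_single pmf_bernoulli_True assms)
  also have "\<dots> = p ^ card A"
  proof -
    have "{x\<in>P. x\<in>A} = A" using assms(2) by auto
    then show ?thesis using assms(1) by (simp add: prod.inter_filter[symmetric])
  qed
  finally show ?thesis .
qed

lemma prob_none:
  assumes "finite P" "A \<subseteq> P" "0 \<le> p" "p \<le> 1"
  shows "measure_pmf.prob (Pi_pmf P False (\<lambda>_. bernoulli_pmf p)) {f. \<forall>e\<in>A. \<not> f e} = (1 - p) ^ card A"
proof -
  have "{f. \<forall>e\<in>A. \<not> f e} = Pi P (\<lambda>e. if e \<in> A then {False} else UNIV)"
    using assms(2) by (auto simp: Pi_def)
  then have "measure_pmf.prob (Pi_pmf P False (\<lambda>_. bernoulli_pmf p)) {f. \<forall>e\<in>A. \<not> f e}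
     = (\<Prod>e\<in>P. measure_pmf.prob (bernoulli_pmf p) (if e \<in> A then {False} else UNIV))"
    by (simp add: measure_Pi_pmf_Pi assms(1))
  also have "\<dots> = (\<Prod>e\<in>P. if e \<in> A then 1 - p else 1)"
    by (intro prod.cong refl) (auto simp: measure_pmf_single pmf_bernoulli_False assms)
  also have "\<dots> = (1 - p) ^ card A"
  proof -
    have "{x\<in>P. x\<in>A} = A" using assms(2) by auto
    then show ?thesis using assms(1) by (simp add: prod.inter_filter[symmetric])
  qed
  finally show ?thesis .
qed

lemma sum_ind_card: "finite A \<Longrightarrow> (\<Sum>x\<in>A. if P x then 1 else (0::real)) = real (card {x\<in>A. P x})"
  by (simp add: sum.inter_filter[symmetric])

lemma core:
  fixes N k :: nat and D p :: real
  assumes N1: "N \<ge> 1" and Dpos: "D > 0" and pdef: "p = D / (8 * N)" and p1: "p \<le> 1"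
    and cl: "real (2*N choose 10) * p^45 < 1/4"
    and ind: "real (2*N choose k) * (1-p)^(k choose 2) < 1/4"
  shows "\<exists>(V::nat set) E. simple_graph V E \<and> card V = N \<and> (\<forall>v\<in>V. real (degree V E v) \<le> D)
     \<and> \<not>(\<exists>S. is_clique V E S \<and> card S = 10) \<and> \<not>(\<exists>S. is_indep_set V E S \<and> card S \<ge> k)"
proof -
  define M where "M = 2*N"
  define P where "P = {e::nat set. e \<subseteq> {0..<M} \<and> card e = 2}"
  define Q where "Q = Pi_pmf P False (\<lambda>_. bernoulli_pmf p)"
  define prs where "prs S = {e. e \<subseteq> S \<and> card e = 2}" for S :: "nat set"
  define T10 where "T10 = {S. S \<subseteq> {0..<M} \<and> card S = 10}"
  define Tk where "Tk = {S. S \<subseteq> {0..<M} \<and> card S = k}"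
  define Xd where "Xd f = (\<Sum>v\<in>{0..<M}. \<Sum>u\<in>{0..<M}. indicator {f. u \<noteq> v \<and> f {v,u}} f :: real)" for f
  define Xc where "Xc f = (\<Sum>S\<in>T10. indicator {f. \<forall>e\<in>prs S. f e} f :: real)" for f
  define Xi where "Xi f = (\<Sum>S\<in>Tk. indicator {f. \<forall>e\<in>prs S. \<not> f e} f :: real)" for f
  define X where "X f = Xd f / (D * N) + Xc f + Xi f" for f
  have p0: "0 \<le> p" using pdef Dpos N1 by simp
  have finP: "finite P" unfolding P_def
    by (rule finite_subset[of _ "Pow {0..<M}"]) auto
  have finQ: "finite (set_pmf Q)" unfolding Q_def by (rule finite_set_Pi_bern[OF finP])
  have int: "integrable (measure_pmf Q) g" for g :: "(nat set \<Rightarrow> bool) \<Rightarrow> real"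
    using finQ by (rule integrable_measure_pmf_finite)
  have Eind: "measure_pmf.expectation Q (indicator A) = measure_pmf.prob Q A" for A :: "(nat set \<Rightarrow> bool) set"
    by (simp add: integral_indicator)
  have prsP: "prs S \<subseteq> P" if "S \<subseteq> {0..<M}" for S
    using that unfolding prs_def P_def by auto
  have cardprs: "card (prs S) = card S choose 2" if "finite S" for S
    unfolding prs_def using n_subsets[OF that] by simp
  have EXd: "measure_pmf.expectation Q Xd \<le> real M * real M * p"
  proof -
    have "measure_pmf.expectation Q Xd = (\<Sum>v\<in>{0..<M}. \<Sum>u\<in>{0..<M}. measure_pmf.prob Q {f. u \<noteq> v \<and> f {v,u}})"
      unfolding Xd_def
      by (simp add: Bochner_Integration.integral_sum int integral_indicator)
    also have "\<dots> \<le> (\<Sum>v\<in>{0..<M}. \<Sum>u\<in>{0..<M}. p)"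
    proof (intro sum_mono)
      fix v u assume uv: "v \<in> {0..<M}" "u \<in> {0..<M}"
      show "measure_pmf.prob Q {f. u \<noteq> v \<and> f {v,u}} \<le> p"
      proof (cases "u = v")
        case True then show ?thesis using p0 by simp
      next
        case False
        have "{f. u \<noteq> v \<and> f {v,u}} = {f. \<forall>e\<in>{{v,u}}. f e}" using False by auto
        moreover have "{{v,u}} \<subseteq> P" using False uv unfolding P_def by auto
        ultimately show ?thesis unfolding Q_def using prob_all[OF finP _ p0 p1, of "{{v,u}}"] by simp
      qed
    qed
    also have "\<dots> = real M * real M * p" by simp
    finally show ?thesis .
  qed
  have EXc: "measure_pmf.expectation Q Xc = real (M choose 10) * p^45"
  proof -
    have "measure_pmf.expectation Q Xc = (\<Sum>S\<in>T10. measure_pmf.prob Q {f. \<forall>e\<in>prs S. f e})"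
      unfolding Xc_def by (simp add: Bochner_Integration.integral_sum int integral_indicator)
    also have "\<dots> = (\<Sum>S\<in>T10. p^45)"
    proof (intro sum.cong refl)
      fix S assume "S \<in> T10"
      then have S: "S \<subseteq> {0..<M}" "card S = 10" unfolding T10_def by auto
      then have "finite S" using finite_subset by blast
      then have "card (prs S) = 45" using cardprs S by (simp add: choose_two)
      then show "measure_pmf.prob Q {f. \<forall>e\<in>prs S. f e} = p^45"
        unfolding Q_def using prob_all[OF finP prsP[OF S(1)] p0 p1] by simp
    qed
    also have "\<dots> = real (M choose 10) * p^45"
      unfolding T10_def using n_subsets[of "{0..<M}" 10] by simp
    finally show ?thesis .
  qed
  have EXi: "measure_pmf.expectation Q Xi = real (M choose k) * (1-p)^(k choose 2)"
  proof -
    have "measure_pmf.expectation Q Xi = (\<Sum>S\<in>Tk. measure_pmf.prob Q {f. \<forall>e\<in>prs S. \<not> f e})"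
      unfolding Xi_def by (simp add: Bochner_Integration.integral_sum int integral_indicator)
    also have "\<dots> = (\<Sum>S\<in>Tk. (1-p)^(k choose 2))"
    proof (intro sum.cong refl)
      fix S assume "S \<in> Tk"
      then have S: "S \<subseteq> {0..<M}" "card S = k" unfolding Tk_def by auto
      then have "finite S" using finite_subset by blast
      then have "card (prs S) = k choose 2" using cardprs S by simp
      then show "measure_pmf.prob Q {f. \<forall>e\<in>prs S. \<not> f e} = (1-p)^(k choose 2)"
        unfolding Q_def using prob_none[OF finP prsP[OF S(1)] p0 p1] by simp
    qed
    also have "\<dots> = real (M choose k) * (1-p)^(k choose 2)"
      unfolding Tk_def using n_subsets[of "{0..<M}" k] by simp
    finally show ?thesis .
  qed
  have DN: "D * N > 0" using Dpos N1 by simp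
  have "measure_pmf.expectation Q X = measure_pmf.expectation Q Xd / (D * N)
      + measure_pmf.expectation Q Xc + measure_pmf.expectation Q Xi"
    unfolding X_def by (simp add: int)
  also have "\<dots> < 1"
  proof -
    have "measure_pmf.expectation Q Xd / (D * N) \<le> real M * real M * p / (D * N)"
      using EXd DN by (simp add: divide_right_mono)
    also have "\<dots> = 1/2" unfolding M_def pdef using Dpos N1 by (simp add: field_simps)
    finally show ?thesis using EXc EXi cl ind unfolding M_def by simp
  qed
  finally have EX: "measure_pmf.expectation Q X < 1" .
  obtain f where Xf: "X f < 1"
  proof (rule ccontr)
    assume "\<not> thesis"
    with that have "\<forall>f. X f \<ge> 1" by (meson not_less)
    then have "measure_pmf.expectation Q (\<lambda>_. 1) \<le> measure_pmf.expectation Q X"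
      by (intro integral_mono int) auto
    with EX show False by simp
  qed
  have Xd0: "Xd f \<ge> 0" unfolding Xd_def by (intro sum_nonneg) auto
  have Xc0: "Xc f \<ge> 0" unfolding Xc_def by (intro sum_nonneg) auto
  have Xi0: "Xi f \<ge> 0" unfolding Xi_def by (intro sum_nonneg) auto
  have "Xd f / (D * N) < 1" using Xf Xc0 Xi0 unfolding X_def by linarith
  then have XdDN: "Xd f < D * N" using DN by (simp add: divide_less_eq)
  have Xc1: "Xc f < 1" using Xf Xd0 Xi0 DN unfolding X_def by (smt (verit) divide_nonneg_pos)
  have Xi1: "Xi f < 1" using Xf Xd0 Xc0 DN unfolding X_def by (smt (verit) divide_nonneg_pos)
  have finT10: "finite T10" unfolding T10_def by (rule finite_subset[of _ "Pow {0..<M}"]) auto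
  have finTk: "finite Tk" unfolding Tk_def by (rule finite_subset[of _ "Pow {0..<M}"]) auto
  have nocl: "\<not> (\<forall>e\<in>prs S. f e)" if "S \<in> T10" for S
  proof
    assume "\<forall>e\<in>prs S. f e"
    then have "indicator {f. \<forall>e\<in>prs S. f e} f = (1::real)" by simp
    moreover have "indicator {f. \<forall>e\<in>prs S. f e} f \<le> Xc f" unfolding Xc_def
      by (rule member_le_sum[OF that _ finT10]) auto
    ultimately show False using Xc1 by simp
  qed
  have noind: "\<not> (\<forall>e\<in>prs S. \<not> f e)" if "S \<in> Tk" for S
  proof
    assume "\<forall>e\<in>prs S. \<not> f e"
    then have "indicator {f. \<forall>e\<in>prs S. \<not> f e} f = (1::real)" by simp
    moreover have "indicator {f. \<forall>e\<in>prs S. \<not> f e} f \<le> Xi f" unfolding Xi_def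
      by (rule member_le_sum[OF that _ finTk]) auto
    ultimately show False using Xi1 by simp
  qed
  define Ef where "Ef u v = (u < M \<and> v < M \<and> u \<noteq> v \<and> f {u,v})" for u v
  define dg where "dg v = card {u\<in>{0..<M}. Ef v u}" for v
  have Xd_eq: "Xd f = (\<Sum>v\<in>{0..<M}. real (dg v))"
    unfolding Xd_def
  proof (intro sum.cong refl)
    fix v assume v: "v \<in> {0..<M}"
    have "(\<Sum>u\<in>{0..<M}. indicator {f. u \<noteq> v \<and> f {v,u}} f :: real)
        = (\<Sum>u\<in>{0..<M}. if Ef v u then 1 else 0)"
      using v by (intro sum.cong refl) (auto simp: Ef_def)
    also have "\<dots> = real (dg v)" unfolding dg_def by (rule sum_ind_card) simp
    finally show "(\<Sum>u\<in>{0..<M}. indicator {f. u \<noteq> v \<and> f {v,u}} f :: real) = real (dg v)" .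
  qed
  define high where "high = {v\<in>{0..<M}. real (dg v) > D}"
  have finhigh: "finite high" unfolding high_def by simp
  have "card high < N"
  proof (rule ccontr)
    assume "\<not> card high < N"
    then have ch: "card high \<ge> N" by simp
    then have "high \<noteq> {}" using N1 by auto
    then have "(\<Sum>v\<in>high. D) < (\<Sum>v\<in>high. real (dg v))"
      by (intro sum_strict_mono finhigh) (auto simp: high_def)
    also have "\<dots> \<le> (\<Sum>v\<in>{0..<M}. real (dg v))"
      by (intro sum_mono2) (auto simp: high_def)
    finally have "real (card high) * D < Xd f" using Xd_eq by simp
    moreover have "real N * D \<le> real (card high) * D" using ch Dpos by simp
    ultimately show False using XdDN by (simp add: mult.commute)
  qed
  define low where "low = {0..<M} - high"
  have "card low = M - card high" unfolding low_def
    by (subst card_Diff_subset) (auto simp: high_def finhigh)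
  then have "N \<le> card low" using \<open>card high < N\<close> unfolding M_def by simp
  then obtain V where V: "V \<subseteq> low" "card V = N" using ex_card by metis
  have VM: "V \<subseteq> {0..<M}" using V unfolding low_def by auto
  define E' where "E' u v = (u \<in> V \<and> v \<in> V \<and> Ef u v)" for u v
  have sg: "simple_graph V E'"
    unfolding simple_graph_def E'_def Ef_def
    using VM finite_subset by (auto simp: insert_commute)
  have degs: "\<forall>v\<in>V. real (degree V E' v) \<le> D"
  proof
    fix v assume v: "v \<in> V"
    have "degree V E' v \<le> dg v" unfolding Defs.degree_def dg_def E'_def
      by (rule card_mono) (use VM in auto)
    moreover have "real (dg v) \<le> D" using v V(1) unfolding low_def high_def by auto
    ultimately show "real (degree V E' v) \<le> D" by linarith
  qed
  have pr2: "\<exists>x y. x \<in> S \<and> y \<in> S \<and> x \<noteq> y \<and> e = {x,y}" if "e \<in> prs S" for e S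
    using that unfolding prs_def by (auto simp: card_2_iff)
  have ncl: "\<not>(\<exists>S. is_clique V E' S \<and> card S = 10)"
  proof
    assume "\<exists>S. is_clique V E' S \<and> card S = 10"
    then obtain S where S: "is_clique V E' S" "card S = 10" by blast
    then have "S \<in> T10" using VM unfolding is_clique_def T10_def by auto
    moreover have "\<forall>e\<in>prs S. f e"
    proof
      fix e assume "e \<in> prs S"
      then obtain x y where "x \<in> S" "y \<in> S" "x \<noteq> y" "e = {x,y}" using pr2 by blast
      then show "f e" using S(1) unfolding is_clique_def E'_def Ef_def by auto
    qed
    ultimately show False using nocl by blast
  qed
  have nind: "\<not>(\<exists>S. is_indep_set V E' S \<and> card S \<ge> k)"
  proof
    assume "\<exists>S. is_indep_set V E' S \<and> card S \<ge> k"
    then obtain S0 where S0: "is_indep_set V E' S0" "card S0 \<ge> k" by blast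
    then obtain S where S: "S \<subseteq> S0" "card S = k" using ex_card by metis
    have SV: "S \<subseteq> V" using S S0 unfolding is_indep_set_def by auto
    then have "S \<in> Tk" using VM S unfolding Tk_def by auto
    moreover have "\<forall>e\<in>prs S. \<not> f e"
    proof
      fix e assume "e \<in> prs S"
      then obtain x y where xy: "x \<in> S" "y \<in> S" "x \<noteq> y" "e = {x,y}" using pr2 by blast
      then have "\<not> E' x y" using S0(1) S(1) unfolding is_indep_set_def by auto
      then show "\<not> f e" using xy SV VM unfolding E'_def Ef_def by auto
    qed
    ultimately show False using noind by blast
  qed
  show ?thesis using sg V(2) degs ncl nind by blast
qed

lemma choose_le_pow_real: "real (n choose j) \<le> real n ^ j"
proof (cases "j \<le> n")
  case True
  then have "n choose j \<le> n ^ j" by (rule binomial_le_pow)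
  then show ?thesis by (metis of_nat_le_iff of_nat_power)
next
  case False
  then show ?thesis by (simp add: binomial_eq_0)
qed

lemma main_x:
  fixes x a D :: real
  assumes adef: "a = x powr (3/2) / (10^6 * ln x)" and Ddef: "D = 3 * x / (2 * 10^3)"
  assumes A1: "a \<ge> 3/2" and A2: "D \<le> 8*(a-1/2)" and A3: "2^10 * D^45 / (8^45 * (a-1/2)^35) < 1/4"
    and A4: "ln(2*a+1) + 4 \<le> D/(8*(a+1/2)) * (sqrt x/50 - 1)/2" and A5: "sqrt x / 50 \<ge> 1" and xpos: "x > 0"
  shows "\<exists>(V::nat set) E. simple_graph V E \<and> card V = nat (round a) \<and> (\<forall>v\<in>V. real (degree V E v) \<le> D)
     \<and> \<not>(\<exists>S. is_clique V E S \<and> card S = 10) \<and> \<not>(\<exists>S. is_indep_set V E S \<and> real (card S) \<ge> sqrt x / 50)"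
proof -
  define N where "N = nat (round a)"
  have rlo: "of_int (round a) \<ge> a - 1/2" using of_int_round_ge[of a] by simp
  have rhi: "of_int (round a) \<le> a + 1/2" using of_int_round_le[of a] by simp
  have "round a \<ge> 1" using rlo A1 by linarith
  then have rN: "real N = of_int (round a)" unfolding N_def by simp
  have Nlo: "real N \<ge> a - 1/2" and Nhi: "real N \<le> a + 1/2" using rN rlo rhi by auto
  have N1: "N \<ge> 1" using Nlo A1 by linarith
  have Npos: "real N > 0" using N1 by simp
  have Dpos: "D > 0" using Ddef xpos by simp
  define p where "p = D / (8 * N)"
  define k where "k = nat (ceiling (sqrt x / 50))"
  have p0: "p > 0" unfolding p_def using Dpos Npos by simp
  have p1: "p \<le> 1" unfolding p_def using A2 Nlo Npos by (simp add: divide_le_eq)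
  have cl: "real (2*N choose 10) * p^45 < 1/4"
  proof -
    have "real (2*N choose 10) * p^45 \<le> real (2*N)^10 * p^45"
      using p0 by (intro mult_right_mono[OF choose_le_pow_real]) auto
    also have "\<dots> = 2^10 * D^45 / (8^45 * real N^35)"
      unfolding p_def using Npos by (simp add: power_divide power_mult_distrib field_simps)
    also have "\<dots> \<le> 2^10 * D^45 / (8^45 * (a-1/2)^35)"
      using Nlo A1 Dpos by (intro divide_left_mono mult_left_mono power_mono mult_pos_pos zero_less_power) auto
    finally show ?thesis using A3 by linarith
  qed
  have ind: "real (2*N choose k) * (1-p)^(k choose 2) < 1/4"
  proof -
    define s where "s = sqrt x / 50"
    have ks: "real k \<ge> s" unfolding k_def s_def by linarith
    have k1: "real k \<ge> 1" using ks A5 s_def by linarith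
    have "real (2*N choose k) * (1-p)^(k choose 2) \<le> real (2*N)^k * exp (-p)^(k choose 2)"
    proof (intro mult_mono choose_le_pow_real power_mono)
      show "1 - p \<le> exp (-p)" using exp_ge_add_one_self[of "-p"] by simp
    qed (use p1 in auto)
    also have "\<dots> = exp (real k * ln (2*N)) * exp (- p * real (k choose 2))"
    proof -
      have e1: "real (2*N)^k = exp (real k * ln (2*N))" using Npos by (subst exp_of_nat_mult) simp
      have e2: "exp (-p)^(k choose 2) = exp (- p * real (k choose 2))"
        using exp_of_nat_mult[of "k choose 2" "-p"] by (simp add: mult.commute)
      show ?thesis using e1 e2 by simp
    qed
    also have "\<dots> = exp (real k * (ln (2*N) - p * (real k - 1) / 2))"
      by (simp add: exp_add[symmetric] choose2_real algebra_simps add_divide_distrib[symmetric])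
    also have "\<dots> \<le> exp (real k * (-4))"
    proof -
      have "ln (2*N) \<le> ln (2*a+1)" using Npos Nhi by simp
      have pp: "p \<ge> D/(8*(a+1/2))" unfolding p_def using Npos Nhi Dpos by (intro divide_left_mono) auto
      have "p * (real k - 1) \<ge> D/(8*(a+1/2)) * (s - 1)"
        using pp ks A5 s_def p0 by (intro mult_mono) auto
      moreover obtain q where q: "q = D/(8*(a+1/2)) * (s - 1)" by blast
      moreover obtain r where r: "r = p * (real k - 1)" by blast
      ultimately have "q \<le> r" "ln(2*a+1) + 4 \<le> q/2" using A4 unfolding s_def by auto
      then have "ln (2*N) - r / 2 \<le> -4"
        using \<open>ln (2*N) \<le> ln (2*a+1)\<close> by linarith
      then have "ln (2*N) - p * (real k - 1) / 2 \<le> -4" using r by simp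
      then have "real k * (ln (2*N) - p * (real k - 1) / 2) \<le> real k * (-4)"
        using k1 by (intro mult_left_mono) auto
      then show ?thesis by simp
    qed
    also have "\<dots> \<le> exp (-4)" using k1 by simp
    also have "\<dots> < 1/4"
    proof -
      have "exp (4::real) \<ge> 5" using exp_ge_add_one_self[of 4] by simp
      then show ?thesis by (simp add: exp_minus field_simps)
    qed
    finally show ?thesis .
  qed
  obtain V :: "nat set" and E where G: "simple_graph V E" "card V = N" "\<forall>v\<in>V. real (degree V E v) \<le> D"
    "\<not>(\<exists>S. is_clique V E S \<and> card S = 10)" "\<not>(\<exists>S. is_indep_set V E S \<and> card S \<ge> k)"
    using core[OF N1 Dpos p_def p1 cl ind] by blast
  have "\<not>(\<exists>S. is_indep_set V E S \<and> real (card S) \<ge> sqrt x / 50)"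
  proof
    assume "\<exists>S. is_indep_set V E S \<and> real (card S) \<ge> sqrt x / 50"
    then obtain S where "is_indep_set V E S" "real (card S) \<ge> sqrt x / 50" by blast
    moreover then have "card S \<ge> k" unfolding k_def by (simp add: nat_ceiling_le_eq)
    ultimately show False using G(5) by blast
  qed
  then show ?thesis using G N_def by blast
qed

theorem lemma2p1:
  shows "\<exists>n0::nat. \<forall>n\<ge>n0. \<exists>(V::nat set) E.
     simple_graph V E
     \<and> card V = nat (round (real n powr (3/2) / (10^6 * ln (real n))))
     \<and> (\<forall>v\<in>V. real (degree V E v) \<le> 3 * real n / (2 * 10^3))
     \<and> \<not> (\<exists>S. is_clique V E S \<and> card S = 10)
     \<and> \<not> (\<exists>S. is_indep_set V E S \<and> real (card S) \<ge> sqrt (real n) / 50)"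
proof -
  have e1: "eventually (\<lambda>x::real. x powr (3/2) / (10^6 * ln x) \<ge> 3/2) at_top" by real_asymp
  have e2: "eventually (\<lambda>x::real. 3 * x / (2 * 10^3) \<le> 8*(x powr (3/2) / (10^6 * ln x)-1/2)) at_top" by real_asymp
  have e3: "eventually (\<lambda>x::real. 2^10 * (3 * x / (2 * 10^3))^45 / (8^45 * (x powr (3/2) / (10^6 * ln x)-1/2)^35) < 1/4) at_top"
    by real_asymp
  have e4: "eventually (\<lambda>x::real. ln(2*(x powr (3/2) / (10^6 * ln x))+1) + 4
     \<le> (3 * x / (2 * 10^3))/(8*((x powr (3/2) / (10^6 * ln x))+1/2)) * (sqrt x/50 - 1)/2) at_top" by real_asymp
  have e5: "eventually (\<lambda>x::real. sqrt x / 50 \<ge> 1) at_top" by real_asymp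
  have e6: "eventually (\<lambda>x::real. x > 0) at_top" by real_asymp
  have "eventually (\<lambda>x::real. (x powr (3/2) / (10^6 * ln x) \<ge> 3/2) \<and>
     (3 * x / (2 * 10^3) \<le> 8*(x powr (3/2) / (10^6 * ln x)-1/2)) \<and>
     (2^10 * (3 * x / (2 * 10^3))^45 / (8^45 * (x powr (3/2) / (10^6 * ln x)-1/2)^35) < 1/4) \<and>
     (ln(2*(x powr (3/2) / (10^6 * ln x))+1) + 4
       \<le> (3 * x / (2 * 10^3))/(8*((x powr (3/2) / (10^6 * ln x))+1/2)) * (sqrt x/50 - 1)/2) \<and>
     (sqrt x / 50 \<ge> 1) \<and> x > 0) at_top"
    using e1 e2 e3 e4 e5 e6 by (intro eventually_conj)
  then obtain x0 where x0: "\<And>x. x \<ge> x0 \<Longrightarrow> (x powr (3/2) / (10^6 * ln x) \<ge> 3/2) \<and>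
     (3 * x / (2 * 10^3) \<le> 8*(x powr (3/2) / (10^6 * ln x)-1/2)) \<and>
     (2^10 * (3 * x / (2 * 10^3))^45 / (8^45 * (x powr (3/2) / (10^6 * ln x)-1/2)^35) < 1/4) \<and>
     (ln(2*(x powr (3/2) / (10^6 * ln x))+1) + 4
       \<le> (3 * x / (2 * 10^3))/(8*((x powr (3/2) / (10^6 * ln x))+1/2)) * (sqrt x/50 - 1)/2) \<and>
     (sqrt x / 50 \<ge> 1) \<and> x > 0"
    unfolding eventually_at_top_linorder by blast
  show ?thesis
  proof (rule exI[of _ "nat (ceiling x0)"], intro allI impI)
    fix n :: nat assume "n \<ge> nat (ceiling x0)"
    then have "real n \<ge> x0" by linarith
    note h = x0[OF this]
    show "\<exists>(V::nat set) E.
     simple_graph V E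
     \<and> card V = nat (round (real n powr (3/2) / (10^6 * ln (real n))))
     \<and> (\<forall>v\<in>V. real (degree V E v) \<le> 3 * real n / (2 * 10^3))
     \<and> \<not> (\<exists>S. is_clique V E S \<and> card S = 10)
     \<and> \<not> (\<exists>S. is_indep_set V E S \<and> real (card S) \<ge> sqrt (real n) / 50)"
      using h by (intro main_x[OF refl refl]) auto
  qed
qed

end
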